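(* Let $\Gamma$ be a finite simple graph and $A_\Gamma$ the right-angled Artin group on $\Gamma$, with standard generating set $S=V(\Gamma)^{\pm1}$. Then for $g\in A_\Gamma\smallsetminus\{e\}$, $\kappa(g)=0$ if and only if $g$ is central in $A_\Gamma$; otherwise $\kappa(g)<0$.
   Context: The right-angled Artin group $A_\Gamma$ has generators the vertices of $\Gamma$ and relations $[u,v]=e$ for each edge $\{u,v\}$ of $\Gamma$. For a group with finite generating set $S$ ($S=S^{-1}$, $e\notin S$), $|x|$ is word length, $\mathrm{Av}(g)=\frac{1}{|S|}\sum_{a\in S}|a^{-1}ga|$, and for $g\neq e$ the curvature is $\kappa(g)=\frac{|g|-\mathrm{Av}(g)}{|g|}$. *)

theory Defs
  imports Complex_Main
begin

text \<open>Elements are represented by words over the letters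
 (v, b), where (v, True) stands for the generator v and (v, False) for its inverse.\<close>

type_synonym 'v letter = "'v \<times> bool"

definition letter_inv :: "'v letter \<Rightarrow> 'v letter" where
  "letter_inv a = (fst a, \<not> snd a)"

inductive raag_step :: "('v \<Rightarrow> 'v \<Rightarrow> bool) \<Rightarrow> 'v letter list \<Rightarrow> 'v letter list \<Rightarrow> bool"
  for E where
  cancel: "raag_step E (u @ [(x, b), (x, \<not> b)] @ w) (u @ w)"
| comm: "E x y \<Longrightarrow> raag_step E (u @ [(x, b), (y, c)] @ w) (u @ [(y, c), (x, b)] @ w)"

definition raag_eq :: "('v \<Rightarrow> 'v \<Rightarrow> bool) \<Rightarrow> 'v letter list \<Rightarrow> 'v letter list \<Rightarrow> bool" where
  "raag_eq E = (\<lambda>p q. raag_step E p q \<or> raag_step E q p)\<^sup>*\<^sup>*"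

definition raag_len :: "'v set \<Rightarrow> ('v \<Rightarrow> 'v \<Rightarrow> bool) \<Rightarrow> 'v letter list \<Rightarrow> nat" where
  "raag_len V E w = (LEAST n. \<exists>w'. w' \<in> lists (V \<times> UNIV) \<and> raag_eq E w w' \<and> length w' = n)"

definition gens :: "'v set \<Rightarrow> 'v letter set" where
  "gens V = V \<times> (UNIV :: bool set)"

definition raag_Av :: "'v set \<Rightarrow> ('v \<Rightarrow> 'v \<Rightarrow> bool) \<Rightarrow> 'v letter list \<Rightarrow> real" where
  "raag_Av V E w = (\<Sum>a\<in>gens V. real (raag_len V E ([letter_inv a] @ w @ [a]))) / real (card (gens V))"

definition raag_curv :: "'v set \<Rightarrow> ('v \<Rightarrow> 'v \<Rightarrow> bool) \<Rightarrow> 'v letter list \<Rightarrow> real" where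
  "raag_curv V E w = (real (raag_len V E w) - raag_Av V E w) / real (raag_len V E w)"

definition raag_central :: "'v set \<Rightarrow> ('v \<Rightarrow> 'v \<Rightarrow> bool) \<Rightarrow> 'v letter list \<Rightarrow> bool" where
  "raag_central V E w = (\<forall>u \<in> lists (gens V). raag_eq E (w @ u) (u @ w))"

end

theory Submission
  imports Defs
begin


fun fnc :: "('v \<Rightarrow> 'v \<Rightarrow> bool) \<Rightarrow> 'v \<Rightarrow> 'v letter list \<Rightarrow> 'v letter option" where
  "fnc E x [] = None"
| "fnc E x (c # w) = (if E x (fst c) then fnc E x w else Some c)"

fun lmul :: "('v \<Rightarrow> 'v \<Rightarrow> bool) \<Rightarrow> 'v letter \<Rightarrow> 'v letter list \<Rightarrow> 'v letter list" where
  "lmul E a [] = [a]"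
| "lmul E a (c # w) = (if c = letter_inv a then w
      else if E (fst a) (fst c) then c # lmul E a w else a # c # w)"

definition nf :: "('v \<Rightarrow> 'v \<Rightarrow> bool) \<Rightarrow> 'v letter list \<Rightarrow> 'v letter list" where
  "nf E w = foldr (lmul E) w []"

fun reduced :: "('v \<Rightarrow> 'v \<Rightarrow> bool) \<Rightarrow> 'v letter list \<Rightarrow> bool" where
  "reduced E [] = True"
| "reduced E (c # w) = (reduced E w \<and> fnc E (fst c) w \<noteq> Some (letter_inv c))"

inductive swp :: "('v \<Rightarrow> 'v \<Rightarrow> bool) \<Rightarrow> 'v letter list \<Rightarrow> 'v letter list \<Rightarrow> bool" for E where
  "E (fst c) (fst d) \<Longrightarrow> swp E (p @ c # d # q) (p @ d # c # q)"

lemma inv_inv[simp]: "letter_inv (letter_inv a) = a"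
  by (cases a) (simp add: letter_inv_def)
lemma fst_inv[simp]: "fst (letter_inv a) = fst a"
  by (simp add: letter_inv_def)
lemma inv_neq[simp]: "letter_inv a \<noteq> a" "a \<noteq> letter_inv a"
  by (cases a, simp add: letter_inv_def)+
lemma inv_eq_iff: "letter_inv a = c \<longleftrightarrow> a = letter_inv c"
  by auto

lemma swp_length: "swp E w w' \<Longrightarrow> length w' = length w"
  by (induction rule: swp.induct) auto

lemma eqv_length: "(swp E)\<^sup>*\<^sup>* w w' \<Longrightarrow> length w' = length w"
  by (induction rule: rtranclp_induct) (auto dest: swp_length)

lemma swp_Cons: "swp E w w' \<Longrightarrow> swp E (c # w) (c # w')"
proof (induction rule: swp.induct)
  case (1 c' d p q)
  then show ?case using swp.intros[of E c' d "c # p" q] by simp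
qed

lemma eqv_Cons: "(swp E)\<^sup>*\<^sup>* w w' \<Longrightarrow> (swp E)\<^sup>*\<^sup>* (c # w) (c # w')"
  by (induction rule: rtranclp_induct) (auto intro: rtranclp.rtrancl_into_rtrancl swp_Cons)

lemma eqv_swap: "E (fst c) (fst d) \<Longrightarrow> (swp E)\<^sup>*\<^sup>* (c # d # q) (d # c # q)"
  using swp.intros[of E c d "[]" q] by auto

lemma set_lmul: "set (lmul E a w) \<subseteq> insert a (set w)"
  by (induction w) auto

context
  fixes E :: "'v \<Rightarrow> 'v \<Rightarrow> bool"
  assumes Esym: "\<And>x y. E x y \<Longrightarrow> E y x" and Eirr: "\<And>x. \<not> E x x"
begin

lemma swp_sym: "swp E w w' \<Longrightarrow> swp E w' w"
  by (induction rule: swp.induct) (auto intro: swp.intros Esym)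

lemma eqv_sym: "(swp E)\<^sup>*\<^sup>* w w' \<Longrightarrow> (swp E)\<^sup>*\<^sup>* w' w"
proof (induction rule: rtranclp_induct)
  case base
  then show ?case by simp
next
  case (step y z)
  then show ?case by (meson converse_rtranclp_into_rtranclp swp_sym)
qed

lemma lmul_swp0: "E (fst c) (fst d) \<Longrightarrow> (swp E)\<^sup>*\<^sup>* (lmul E a (c # d # q)) (lmul E a (d # c # q))"
proof -
  assume cd: "E (fst c) (fst d)"
  have dc: "E (fst d) (fst c)" using Esym cd .
  show ?thesis
  proof (cases "c = letter_inv a")
    case True
    have ad: "E (fst a) (fst d)" using True cd by (metis fst_inv)
    then have "d \<noteq> letter_inv a" using Eirr by (metis fst_inv)
    note ad this
    then show ?thesis using True by simp
  next
    case c: False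
    show ?thesis
    proof (cases "d = letter_inv a")
      case True
      then have "E (fst a) (fst c)" using dc by (metis fst_inv)
      then show ?thesis using True c by simp
    next
      case d: False
      show ?thesis
      proof (cases "E (fst a) (fst c)")
        case ac: True
        show ?thesis
        proof (cases "E (fst a) (fst d)")
          case True
          then show ?thesis using ac c d by (simp add: eqv_swap cd)
        next
          case False
          have "(swp E)\<^sup>*\<^sup>* (c # a # d # q) (a # c # d # q)" using eqv_swap[of E c a] Esym ac by blast
          moreover have "(swp E)\<^sup>*\<^sup>* (a # c # d # q) (a # d # c # q)" using eqv_Cons eqv_swap cd by blast
          ultimately show ?thesis using ac c d False by simp
        qed
      next
        case ac: False
        show ?thesis
        proof (cases "E (fst a) (fst d)")
          case True
          have "(swp E)\<^sup>*\<^sup>* (a # c # d # q) (a # d # c # q)" using eqv_Cons eqv_swap cd by blast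
          moreover have "(swp E)\<^sup>*\<^sup>* (a # d # c # q) (d # a # c # q)" using eqv_swap[of E a d] True by blast
          ultimately show ?thesis using ac c d True by simp
        next
          case False
          then show ?thesis using ac c d by (simp add: eqv_Cons eqv_swap cd)
        qed
      qed
    qed
  qed
qed

lemma lmul_swp: "swp E w w' \<Longrightarrow> (swp E)\<^sup>*\<^sup>* (lmul E a w) (lmul E a w')"
proof (induction rule: swp.induct)
  case (1 c d p q)
  then show ?case
  proof (induction p)
    case Nil
    then show ?case using lmul_swp0 by simp
  next
    case (Cons e p)
    then show ?case
      by (auto intro: eqv_Cons swp.intros[of E c d "e # p" q, simplified] swp.intros[of E c d p q])
  qed
qed

lemma lmul_eqv: "(swp E)\<^sup>*\<^sup>* w w' \<Longrightarrow> (swp E)\<^sup>*\<^sup>* (lmul E a w) (lmul E a w')"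
  by (induction rule: rtranclp_induct) (auto dest: lmul_swp intro: rtranclp_trans)

lemma foldr_eqv: "(swp E)\<^sup>*\<^sup>* r r' \<Longrightarrow> (swp E)\<^sup>*\<^sup>* (foldr (lmul E) u r) (foldr (lmul E) u r')"
  by (induction u) (auto intro: lmul_eqv)

end


context
  fixes E :: "'v \<Rightarrow> 'v \<Rightarrow> bool"
  assumes Esym: "\<And>x y. E x y \<Longrightarrow> E y x" and Eirr: "\<And>x. \<not> E x x"
begin

lemma lmul_comm: "E (fst a) (fst d) \<Longrightarrow> (swp E)\<^sup>*\<^sup>* (lmul E a (lmul E d r)) (lmul E d (lmul E a r))"
proof (induction r)
  case Nil
  have "d \<noteq> letter_inv a" using Nil Eirr by (metis fst_inv)
  then show ?case using Nil eqv_swap[of E d a "[]"] Esym by auto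
next
  case (Cons c w)
  have da: "E (fst d) (fst a)" using Cons.prems Esym by blast
  have dia: "d \<noteq> letter_inv a" "a \<noteq> letter_inv d" using Cons.prems Eirr by (metis fst_inv)+
  show ?case
  proof (cases "c = letter_inv a")
    case True
    then have "E (fst d) (fst c)" "c \<noteq> letter_inv d" using da Eirr by (metis fst_inv)+
    then show ?thesis using True by simp
  next
    case c1: False
    show ?thesis
    proof (cases "c = letter_inv d")
      case True
      then have "E (fst a) (fst c)" using Cons.prems by (metis fst_inv)
      then show ?thesis using True c1 by simp
    next
      case c2: False
      show ?thesis
      proof (cases "E (fst a) (fst c)")
        case ac: True
        show ?thesis
        proof (cases "E (fst d) (fst c)")
          case True
          then show ?thesis using ac c1 c2 Cons by (simp add: eqv_Cons)
        next
          case False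
          then show ?thesis using ac c1 c2 Cons.prems dia by simp
        qed
      next
        case ac: False
        show ?thesis
        proof (cases "E (fst d) (fst c)")
          case True
          then show ?thesis using ac c1 c2 Cons.prems dia da by simp
        next
          case False
          then show ?thesis using ac c1 c2 Cons.prems dia da eqv_swap[of E d a] by simp
        qed
      qed
    qed
  qed
qed

lemma fnc_lmul: "E x (fst a) \<Longrightarrow> fnc E x (lmul E a w) = fnc E x w"
  by (induction w) (auto simp: Esym)

lemma reduced_lmul: "reduced E r \<Longrightarrow> reduced E (lmul E a r)"
proof (induction r)
  case Nil
  then show ?case by simp
next
  case (Cons c w)
  show ?case
  proof (cases "c = letter_inv a")
    case True
    then show ?thesis using Cons by simp
  next
    case c1: False
    show ?thesis
    proof (cases "E (fst a) (fst c)")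
      case True
      have "fnc E (fst c) (lmul E a w) = fnc E (fst c) w"
        using fnc_lmul True Esym by blast
      then show ?thesis using True c1 Cons by simp
    next
      case False
      then show ?thesis using c1 Cons.prems by (auto simp: inv_eq_iff)
    qed
  qed
qed

lemma lmul_noncancel: "fnc E (fst a) w \<noteq> Some (letter_inv a) \<Longrightarrow> (swp E)\<^sup>*\<^sup>* (lmul E a w) (a # w)"
proof (induction w)
  case Nil
  then show ?case by simp
next
  case (Cons d w)
  show ?case
  proof (cases "d = letter_inv a")
    case True
    then show ?thesis using Cons.prems by (simp add: Eirr)
  next
    case d1: False
    show ?thesis
    proof (cases "E (fst a) (fst d)")
      case True
      then have "(swp E)\<^sup>*\<^sup>* (lmul E a (d # w)) (d # a # w)" using Cons d1 by (simp add: eqv_Cons)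
      moreover have "(swp E)\<^sup>*\<^sup>* (d # a # w) (a # d # w)" using eqv_swap[of E d a] True Esym by blast
      ultimately show ?thesis by (rule rtranclp_trans)
    next
      case False
      then show ?thesis using d1 by simp
    qed
  qed
qed

lemma lmul_cancel: "reduced E r \<Longrightarrow> (swp E)\<^sup>*\<^sup>* (lmul E a (lmul E (letter_inv a) r)) r"
proof (induction r)
  case Nil
  then show ?case by simp
next
  case (Cons c w)
  show ?case
  proof (cases "c = a")
    case True
    then have "fnc E (fst a) w \<noteq> Some (letter_inv a)" using Cons.prems by simp
    then show ?thesis using True lmul_noncancel by simp
  next
    case c1: False
    show ?thesis
    proof (cases "E (fst a) (fst c)")
      case True
      have "c \<noteq> letter_inv a" using True Eirr by (metis fst_inv)
      then show ?thesis using True c1 Cons by (simp add: eqv_Cons inv_eq_iff)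
    next
      case False
      then show ?thesis using c1 by (simp add: inv_eq_iff)
    qed
  qed
qed

lemma reduced_nf: "reduced E (nf E w)"
  by (induction w) (auto simp: nf_def intro: reduced_lmul)

lemma nf_Cons: "nf E (a # w) = lmul E a (nf E w)"
  by (simp add: nf_def)

lemma nf_append: "nf E (u @ w) = foldr (lmul E) u (nf E w)"
  by (simp add: nf_def)

lemma step_nf: "raag_step E w w' \<Longrightarrow> (swp E)\<^sup>*\<^sup>* (nf E w) (nf E w')"
proof (induction rule: raag_step.induct)
  case (cancel u x b w)
  have "(swp E)\<^sup>*\<^sup>* (lmul E (x, b) (lmul E (letter_inv (x, b)) (nf E w))) (nf E w)"
    using lmul_cancel reduced_nf by blast
  then show ?case unfolding nf_append by (simp add: letter_inv_def foldr_eqv Esym Eirr)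
next
  case (comm x y u b c w)
  have "(swp E)\<^sup>*\<^sup>* (lmul E (x, b) (lmul E (y, c) (nf E w))) (lmul E (y, c) (lmul E (x, b) (nf E w)))"
    using lmul_comm comm by simp
  then show ?case unfolding nf_append by (simp add: foldr_eqv Esym Eirr)
qed

lemma eq_nf: "raag_eq E w w' \<Longrightarrow> (swp E)\<^sup>*\<^sup>* (nf E w) (nf E w')"
  unfolding raag_eq_def
proof (induction rule: rtranclp_induct)
  case base
  then show ?case by simp
next
  case (step y z)
  have "(swp E)\<^sup>*\<^sup>* (nf E y) (nf E z)"
    using step(2) step_nf eqv_sym[where E=E, OF Esym Eirr] by blast
  then show ?case using step(3) by (meson rtranclp_trans)
qed

end


lemma nf_Nil[simp]: "nf E [] = []" by (simp add: nf_def)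
lemma nf_Cons2[simp]: "nf E (a # w) = lmul E a (nf E w)" by (simp add: nf_def)

lemma step_prefix: "raag_step E w w' \<Longrightarrow> raag_step E (p @ w) (p @ w')"
proof (induction rule: raag_step.induct)
  case (cancel u x b w)
  then show ?case using raag_step.cancel[of E "p @ u" x b w] by simp
next
  case (comm x y u b c w)
  then show ?case using raag_step.comm[of E x y "p @ u" b c w] by simp
qed

lemma step_suffix: "raag_step E w w' \<Longrightarrow> raag_step E (w @ s) (w' @ s)"
proof (induction rule: raag_step.induct)
  case (cancel u x b w)
  then show ?case using raag_step.cancel[of E u x b "w @ s"] by simp
next
  case (comm x y u b c w)
  then show ?case using raag_step.comm[of E x y u b c "w @ s"] by simp
qed

lemma req_refl[simp]: "raag_eq E w w"
  by (simp add: raag_eq_def)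

lemma req_sym: "raag_eq E w w' \<Longrightarrow> raag_eq E w' w"
  unfolding raag_eq_def
proof (induction rule: rtranclp_induct)
  case base
  then show ?case by simp
next
  case (step y z)
  from step(2) have "raag_step E z y \<or> raag_step E y z" by blast
  then show ?case
    using converse_rtranclp_into_rtranclp[of "\<lambda>p q. raag_step E p q \<or> raag_step E q p" z y w] step.IH
    by blast
qed

lemma req_trans: "raag_eq E u v \<Longrightarrow> raag_eq E v w \<Longrightarrow> raag_eq E u w"
  unfolding raag_eq_def by (rule rtranclp_trans)

lemma req_step: "raag_step E w w' \<Longrightarrow> raag_eq E w w'"
  unfolding raag_eq_def by auto

lemma req_prefix: "raag_eq E w w' \<Longrightarrow> raag_eq E (p @ w) (p @ w')"
  unfolding raag_eq_def
  by (induction rule: rtranclp_induct) (auto intro: rtranclp.rtrancl_into_rtrancl step_prefix)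

lemma req_suffix: "raag_eq E w w' \<Longrightarrow> raag_eq E (w @ s) (w' @ s)"
  unfolding raag_eq_def
  by (induction rule: rtranclp_induct) (auto intro: rtranclp.rtrancl_into_rtrancl step_suffix)

lemma req_Cons: "raag_eq E w w' \<Longrightarrow> raag_eq E (c # w) (c # w')"
  using req_prefix[of E w w' "[c]"] by simp

lemma req_cancel: "raag_eq E (u @ [a, letter_inv a] @ w) (u @ w)"
  using raag_step.cancel[of E u "fst a" "snd a" w] by (cases a) (simp add: letter_inv_def req_step)

lemma req_swap: "E (fst c) (fst d) \<Longrightarrow> raag_eq E (c # d # w) (d # c # w)"
  using raag_step.comm[of E "fst c" "fst d" "[]" "snd c" "snd d" w] req_step by (cases c, cases d) auto

lemma req_lmul: "raag_eq E (lmul E a w) (a # w)"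
proof (induction w)
  case Nil
  then show ?case by simp
next
  case (Cons c w)
  show ?case
  proof (cases "c = letter_inv a")
    case True
    then show ?thesis using req_cancel[of E "[]" a w] req_sym by auto
  next
    case c1: False
    show ?thesis
    proof (cases "E (fst a) (fst c)")
      case True
      have "raag_eq E (c # lmul E a w) (c # a # w)" using Cons req_Cons by blast
      moreover have "raag_eq E (c # a # w) (a # c # w)" using req_swap[of E a c w] True req_sym by blast
      ultimately show ?thesis using True c1 req_trans by auto
    qed (use c1 in simp)
  qed
qed

lemma req_nf: "raag_eq E (nf E w) w"
proof (induction w)
  case Nil
  then show ?case by (simp add: nf_def)
next
  case (Cons a w)
  then show ?case using req_lmul[of E a "nf E w"] req_Cons[of E "nf E w" w a] req_trans
    by (auto simp: nf_Cons2)
qed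

lemma nf_lists: "w \<in> lists A \<Longrightarrow> nf E w \<in> lists A"
proof (induction w)
  case Nil
  then show ?case by (simp add: nf_def)
next
  case (Cons a w)
  then show ?case using set_lmul[of E a "nf E w"] by (auto simp: nf_Cons2)
qed

lemma length_lmul: "length (lmul E a w) \<le> Suc (length w)"
  by (induction w) auto

lemma length_nf: "length (nf E w) \<le> length w"
proof (induction w)
  case Nil
  then show ?case by (simp add: nf_def)
next
  case (Cons a w)
  then show ?case using length_lmul[of E a "nf E w"] by (auto simp: nf_Cons2)
qed

lemma step_parity: "raag_step E w w' \<Longrightarrow> even (length w) = even (length w')"
  by (induction rule: raag_step.induct) auto

lemma req_parity: "raag_eq E w w' \<Longrightarrow> even (length w) = even (length w')"
  unfolding raag_eq_def
  by (induction rule: rtranclp_induct) (auto dest: step_parity)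

context
  fixes E :: "'v \<Rightarrow> 'v \<Rightarrow> bool"
  assumes Esym: "\<And>x y. E x y \<Longrightarrow> E y x" and Eirr: "\<And>x. \<not> E x x"
begin

lemma len_nf: "w \<in> lists (V \<times> UNIV) \<Longrightarrow> raag_len V E w = length (nf E w)"
  unfolding raag_len_def
proof (rule Least_equality)
  assume "w \<in> lists (V \<times> UNIV)"
  then show "\<exists>w'. w' \<in> lists (V \<times> UNIV) \<and> raag_eq E w w' \<and> length w' = length (nf E w)"
  proof (intro exI conjI)
    show "nf E w \<in> lists (V \<times> UNIV)" using nf_lists \<open>w \<in> lists (V \<times> UNIV)\<close> .
    show "raag_eq E w (nf E w)" using req_nf by (rule req_sym)
  qed simp
next
  fix n
  assume "\<exists>w'. w' \<in> lists (V \<times> UNIV) \<and> raag_eq E w w' \<and> length w' = n"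
  then obtain w' where "raag_eq E w w'" "length w' = n" by blast
  then have "(swp E)\<^sup>*\<^sup>* (nf E w) (nf E w')"
    using eq_nf[where E=E, OF Esym Eirr] by blast
  then have "length (nf E w') = length (nf E w)" by (rule eqv_length)
  then show "length (nf E w) \<le> n" using length_nf[of E w'] \<open>length w' = n\<close> by simp
qed

lemma len_le: "raag_eq E w w' \<Longrightarrow> w \<in> lists (V \<times> UNIV) \<Longrightarrow> raag_len V E w \<le> length w'"
proof -
  assume "raag_eq E w w'" "w \<in> lists (V \<times> UNIV)"
  have "(swp E)\<^sup>*\<^sup>* (nf E w) (nf E w')"
    using eq_nf[where E=E, OF Esym Eirr] \<open>raag_eq E w w'\<close> by blast
  then have "length (nf E w') = length (nf E w)" by (rule eqv_length)
  then show ?thesis using len_nf \<open>w \<in> lists (V \<times> UNIV)\<close> length_nf[of E w'] by simp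
qed

lemma len_eq: "raag_eq E w w' \<Longrightarrow> w \<in> lists (V \<times> UNIV) \<Longrightarrow> w' \<in> lists (V \<times> UNIV)
   \<Longrightarrow> raag_len V E w = raag_len V E w'"
proof -
  assume a: "raag_eq E w w'" "w \<in> lists (V \<times> UNIV)" "w' \<in> lists (V \<times> UNIV)"
  have "length (nf E w') = length (nf E w)"
    using eq_nf[where E=E, OF Esym Eirr a(1)] by (rule eqv_length)
  then show ?thesis using len_nf a(2,3) by simp
qed

lemma nf_reduced: "reduced E w \<Longrightarrow> (swp E)\<^sup>*\<^sup>* (nf E w) w"
proof (induction w)
  case Nil
  then show ?case by (simp add: nf_def)
next
  case (Cons c w)
  then have "(swp E)\<^sup>*\<^sup>* (nf E w) w" by simp
  then have "(swp E)\<^sup>*\<^sup>* (lmul E c (nf E w)) (lmul E c w)"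
    using lmul_eqv[where E=E, OF Esym Eirr] by blast
  moreover have "(swp E)\<^sup>*\<^sup>* (lmul E c w) (c # w)"
    using lmul_noncancel[where E=E, OF Esym Eirr] Cons.prems by simp
  ultimately have "(swp E)\<^sup>*\<^sup>* (lmul E c (nf E w)) (c # w)" by (rule rtranclp_trans)
  then show ?case by simp
qed

lemma len_reduced: "reduced E w \<Longrightarrow> w \<in> lists (V \<times> UNIV) \<Longrightarrow> raag_len V E w = length w"
proof -
  assume a: "reduced E w" "w \<in> lists (V \<times> UNIV)"
  have "length w = length (nf E w)" using nf_reduced[OF a(1)] by (rule eqv_length)
  then show ?thesis using len_nf[OF a(2)] by simp
qed

lemma len_parity: "w \<in> lists (V \<times> UNIV) \<Longrightarrow> even (raag_len V E w) = even (length w)"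
proof -
  assume a: "w \<in> lists (V \<times> UNIV)"
  show ?thesis using len_nf[OF a] req_parity[OF req_nf[of E w]] by simp
qed

end

lemma fnc_None: "fnc E x w = None \<longleftrightarrow> (\<forall>e\<in>set w. E x (fst e))"
  by (induction w) auto

lemma fnc_append: "fnc E x (w @ s) = (case fnc E x w of None \<Rightarrow> fnc E x s | Some c \<Rightarrow> Some c)"
  by (induction w) auto

lemma reduced_snoc: "reduced E (w @ [d]) \<longleftrightarrow> reduced E w \<and> fnc E (fst d) (rev w) \<noteq> Some (letter_inv d)"
proof (induction w)
  case Nil
  then show ?case by simp
next
  case (Cons c w)
  have A: "fnc E (fst c) w = None \<longleftrightarrow> fnc E (fst d) (rev w) = None" if "d = letter_inv c"
    using that by (simp add: fnc_None)
  show ?case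
  proof (cases "fnc E (fst c) w")
    case None
    then have N: "fnc E (fst c) w = None" .
    show ?thesis
    proof (cases "d = letter_inv c")
      case True
      then have "fnc E (fst d) (rev w) = None" using A N by simp
      then show ?thesis using Cons.IH N True by (simp add: fnc_append)
    next
      case False
      then have "c \<noteq> letter_inv d" by (auto simp: inv_eq_iff)
      then show ?thesis using Cons.IH N False
        by (simp add: fnc_append split: option.split)
    qed
  next
    case (Some e)
    have B: "c = letter_inv d \<Longrightarrow> fnc E (fst d) (rev w) \<noteq> None"
      using Some A by (auto simp: inv_eq_iff)
    show ?thesis
    proof (cases "fnc E (fst d) (rev w)")
      case None
      then show ?thesis using Cons.IH Some B
        by (simp add: fnc_append split: option.split) blast
    next
      case (Some f)
      then show ?thesis using Cons.IH \<open>fnc E (fst c) w = Some e\<close>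
        by (simp add: fnc_append split: option.split) blast
    qed
  qed
qed



lemma fst_eq_cases: "fst e = fst a \<Longrightarrow> e = a \<or> e = letter_inv a"
  by (cases e; cases a) (auto simp: letter_inv_def)

lemma req_cancel_front: "raag_eq E (a # letter_inv a # w) w"
  using req_cancel[of E "[]" a w] by simp

lemma req_cancel_back: "raag_eq E (w @ [a, letter_inv a]) w"
  using req_cancel[of E w a "[]"] by simp

lemma req_both: "raag_eq E w w' \<Longrightarrow> raag_eq E (p @ w @ s) (p @ w' @ s)"
  using req_prefix req_suffix by blast

lemma fnc_Some: "e \<in> set r \<Longrightarrow> \<not> E x (fst e) \<Longrightarrow> \<exists>f. fnc E x r = Some f"
  using fnc_None[of E x r] by (cases "fnc E x r") auto

lemma gens_lists: "lists (gens V) = lists (V \<times> UNIV)"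
  by (simp add: gens_def)

context
  fixes E :: "'v \<Rightarrow> 'v \<Rightarrow> bool"
  assumes Esym: "\<And>x y. E x y \<Longrightarrow> E y x" and Eirr: "\<And>x. \<not> E x x"
begin

lemma two_first: "fnc E x r = Some f \<Longrightarrow> fst f = x \<Longrightarrow> fnc E z r = Some f' \<Longrightarrow> fst f' = z
   \<Longrightarrow> x \<noteq> z \<Longrightarrow> \<not> E x z \<Longrightarrow> False"
proof (induction r)
  case Nil
  then show ?case by simp
next
  case (Cons h r)
  show ?case
  proof (cases "E x (fst h)")
    case False
    then have "f = h" using Cons.prems by simp
    then have "\<not> E z (fst h)" using Cons.prems Esym by auto
    then show ?thesis using Cons.prems \<open>f = h\<close> by simp
  next
    case True
    show ?thesis
    proof (cases "E z (fst h)")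
      case False
      then have "f' = h" using Cons.prems by simp
      then show ?thesis using Cons.prems True by simp
    next
      case True2: True
      then show ?thesis using Cons True by simp
    qed
  qed
qed

lemma commute_all: "(\<forall>e\<in>set r. fst e = fst a \<or> E (fst a) (fst e)) \<Longrightarrow> raag_eq E (r @ [a]) (a # r)"
proof (induction r)
  case Nil
  then show ?case by simp
next
  case (Cons e r)
  then have IH: "raag_eq E (e # r @ [a]) (e # a # r)" by (simp add: req_Cons)
  have "raag_eq E (e # a # r) (a # e # r)"
  proof (cases "fst e = fst a")
    case True
    then consider "e = a" | "e = letter_inv a" using fst_eq_cases by blast
    then show ?thesis
    proof cases
      case 1
      then show ?thesis by simp
    next
      case 2
      have "raag_eq E (letter_inv a # a # r) r"
        using req_cancel_front[of E "letter_inv a" r] by simp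
      moreover have "raag_eq E r (a # letter_inv a # r)"
        using req_cancel_front[of E a r] req_sym by blast
      ultimately show ?thesis using 2 req_trans by blast
    qed
  next
    case False
    then have "E (fst e) (fst a)" using Cons.prems Esym by auto
    then show ?thesis by (rule req_swap)
  qed
  then show ?case using IH req_trans by fastforce
qed

end


lemma inv_mem: "a \<in> V \<times> UNIV \<Longrightarrow> letter_inv a \<in> V \<times> UNIV"
  by (cases a) (simp add: letter_inv_def)

context
  fixes E :: "'v \<Rightarrow> 'v \<Rightarrow> bool" and V :: "'v set" and g :: "'v letter list"
  assumes Esym: "\<And>x y. E x y \<Longrightarrow> E y x" and Eirr: "\<And>x. \<not> E x x"
    and gl: "g \<in> lists (V \<times> UNIV)"
begin

abbreviation "Lw a \<equiv> raag_len V E ([letter_inv a] @ g @ [a])"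

lemma Wl: "a \<in> V \<times> UNIV \<Longrightarrow> [letter_inv a] @ g @ [a] \<in> lists (V \<times> UNIV)"
  using gl inv_mem by auto

lemma ng: "raag_len V E g = length (nf E g)"
  using len_nf[where E=E, OF Esym Eirr gl] .

lemma Lw_nf: "a \<in> V \<times> UNIV \<Longrightarrow> Lw a = length (nf E ([letter_inv a] @ g @ [a]))"
  using len_nf[where E=E, OF Esym Eirr Wl] .

lemma F1: "a \<in> V \<times> UNIV \<Longrightarrow> length (nf E g) \<le> Lw a + 2"
proof -
  assume a: "a \<in> V \<times> UNIV"
  let ?W = "[letter_inv a] @ g @ [a]"
  have "raag_eq E (a # letter_inv a # g @ [a, letter_inv a]) (g @ [a, letter_inv a])"
    by (rule req_cancel_front)
  moreover have "raag_eq E (g @ [a, letter_inv a]) g" by (rule req_cancel_back)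
  ultimately have "raag_eq E (a # ?W @ [letter_inv a]) g" using req_trans by fastforce
  moreover have "raag_eq E ([a] @ nf E ?W @ [letter_inv a]) ([a] @ ?W @ [letter_inv a])"
    using req_both req_nf by blast
  ultimately have "raag_eq E g (a # nf E ?W @ [letter_inv a])"
    using req_trans req_sym by fastforce
  then have "raag_len V E g \<le> length (a # nf E ?W @ [letter_inv a])"
    using len_le[where E=E, OF Esym Eirr] gl by blast
  then show ?thesis using ng Lw_nf[OF a] by simp
qed

lemma F2: "a \<in> V \<times> UNIV \<Longrightarrow> even (Lw a) = even (length (nf E g))"
proof -
  assume a: "a \<in> V \<times> UNIV"
  have "even (Lw a) = even (length ([letter_inv a] @ g @ [a]))"
    using len_parity[where E=E, OF Esym Eirr Wl[OF a]] .
  moreover have "even (raag_len V E g) = even (length g)"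
    using len_parity[where E=E, OF Esym Eirr gl] .
  ultimately show ?thesis using ng by simp
qed

lemma F3: "a \<in> V \<times> UNIV \<Longrightarrow> fnc E (fst a) (nf E g) \<noteq> Some a \<Longrightarrow> length (nf E g) \<le> Lw a"
proof -
  assume a: "a \<in> V \<times> UNIV" and f: "fnc E (fst a) (nf E g) \<noteq> Some a"
  let ?W = "[letter_inv a] @ g @ [a]"
  have red: "reduced E (letter_inv a # nf E g)"
    using f reduced_nf[where E=E, OF Esym Eirr] by simp
  have l1: "letter_inv a # nf E g \<in> lists (V \<times> UNIV)"
    using nf_lists[OF gl] inv_mem[OF a] by simp
  have "raag_eq E (letter_inv a # nf E g) (letter_inv a # g)"
    using req_Cons req_nf by blast
  moreover have "raag_eq E (letter_inv a # g) (?W @ [letter_inv a])"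
    using req_Cons[OF req_sym[OF req_cancel_back[of E g a]]] by simp
  moreover have "raag_eq E (?W @ [letter_inv a]) (nf E ?W @ [letter_inv a])"
    using req_suffix[OF req_sym[OF req_nf[of E ?W]]] .
  ultimately have "raag_eq E (letter_inv a # nf E g) (nf E ?W @ [letter_inv a])"
    using req_trans by metis
  then have "raag_len V E (letter_inv a # nf E g) \<le> length (nf E ?W @ [letter_inv a])"
    using len_le[where E=E, OF Esym Eirr] l1 by blast
  moreover have "raag_len V E (letter_inv a # nf E g) = Suc (length (nf E g))"
    using len_reduced[where E=E, OF Esym Eirr red l1] by simp
  ultimately show ?thesis using Lw_nf[OF a] by simp
qed

lemma F4: "a \<in> V \<times> UNIV \<Longrightarrow> fnc E (fst a) (rev (nf E g)) \<noteq> Some (letter_inv a) \<Longrightarrow> length (nf E g) \<le> Lw a"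
proof -
  assume a: "a \<in> V \<times> UNIV" and f: "fnc E (fst a) (rev (nf E g)) \<noteq> Some (letter_inv a)"
  let ?W = "[letter_inv a] @ g @ [a]"
  have red: "reduced E (nf E g @ [a])"
    using f reduced_nf[where E=E, OF Esym Eirr] reduced_snoc by blast
  have l1: "nf E g @ [a] \<in> lists (V \<times> UNIV)"
    using nf_lists[OF gl] a by simp
  have "raag_eq E (nf E g @ [a]) (g @ [a])"
    using req_suffix req_nf by blast
  moreover have "raag_eq E (g @ [a]) (a # ?W)"
    using req_sym[OF req_cancel_front[of E a "g @ [a]"]] by simp
  moreover have "raag_eq E (a # ?W) (a # nf E ?W)"
    using req_Cons[OF req_sym[OF req_nf[of E ?W]]] .
  ultimately have "raag_eq E (nf E g @ [a]) (a # nf E ?W)"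
    using req_trans by metis
  then have "raag_len V E (nf E g @ [a]) \<le> length (a # nf E ?W)"
    using len_le[where E=E, OF Esym Eirr] l1 by blast
  moreover have "raag_len V E (nf E g @ [a]) = Suc (length (nf E g))"
    using len_reduced[where E=E, OF Esym Eirr red l1] by simp
  ultimately show ?thesis using Lw_nf[OF a] by simp
qed

lemma F5: "a \<in> V \<times> UNIV \<Longrightarrow> fnc E (fst a) (nf E g) \<noteq> Some a
  \<Longrightarrow> fnc E (fst a) (rev (nf E g)) \<noteq> Some (letter_inv a) \<Longrightarrow> fnc E (fst a) (nf E g) \<noteq> None
  \<Longrightarrow> Lw a = length (nf E g) + 2"
proof -
  assume a: "a \<in> V \<times> UNIV" and f: "fnc E (fst a) (nf E g) \<noteq> Some a"
    and f2: "fnc E (fst a) (rev (nf E g)) \<noteq> Some (letter_inv a)"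
    and f3: "fnc E (fst a) (nf E g) \<noteq> None"
  let ?W = "[letter_inv a] @ g @ [a]"
  let ?W' = "[letter_inv a] @ nf E g @ [a]"
  have red0: "reduced E (nf E g @ [a])"
    using f2 reduced_nf[where E=E, OF Esym Eirr] reduced_snoc by blast
  have "fnc E (fst a) (nf E g @ [a]) = fnc E (fst a) (nf E g)"
    using f3 by (auto simp: fnc_append split: option.split)
  then have red: "reduced E ?W'" using red0 f by simp
  have l1: "?W' \<in> lists (V \<times> UNIV)"
    using nf_lists[OF gl] a inv_mem[OF a] by simp
  have "raag_eq E ?W ?W'"
    using req_both[OF req_sym[OF req_nf[of E g]]] .
  then have "Lw a = raag_len V E ?W'"
    using len_eq[where E=E, OF Esym Eirr _ Wl[OF a] l1] by blast
  also have "\<dots> = length ?W'" using len_reduced[where E=E, OF Esym Eirr red l1] .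
  finally show ?thesis by simp
qed

end


lemma sum_gens: "finite V \<Longrightarrow> (\<Sum>a\<in>gens V. h a) = (\<Sum>x\<in>V. h (x, True) + h (x, False))"
proof -
  assume "finite V"
  have "(\<Sum>a\<in>gens V. h a) = (\<Sum>(x, y)\<in>V \<times> UNIV. h (x, y))"
    by (simp add: gens_def split_beta)
  also have "\<dots> = (\<Sum>x\<in>V. \<Sum>y\<in>UNIV. h (x, y))"
    by (rule sum.cartesian_product[symmetric])
  also have "\<dots> = (\<Sum>x\<in>V. h (x, True) + h (x, False))"
    by (simp add: UNIV_bool add.commute)
  finally show ?thesis .
qed

lemma card_gens: "finite V \<Longrightarrow> card (gens V) = 2 * card V"
  by (simp add: gens_def card_cartesian_product)

context
  fixes E :: "'v \<Rightarrow> 'v \<Rightarrow> bool" and V :: "'v set" and g :: "'v letter list"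
  assumes Esym: "\<And>x y. E x y \<Longrightarrow> E y x" and Eirr: "\<And>x. \<not> E x x"
    and gl: "g \<in> lists (V \<times> UNIV)"
begin

lemma linv_T[simp]: "letter_inv (x, True) = (x, False)" and linv_F[simp]: "letter_inv (x, False) = (x, True)"
  by (simp_all add: letter_inv_def)

lemma pair_ge: "x \<in> V \<Longrightarrow> 2 * length (nf E g) \<le> Lw E V g (x, True) + Lw E V g (x, False)"
proof -
  assume x: "x \<in> V"
  have aV: "(x, True) \<in> V \<times> UNIV" "(x, False) \<in> V \<times> UNIV" using x by auto
  let ?n = "length (nf E g)" and ?F = "fnc E x (nf E g)" and ?L = "fnc E x (rev (nf E g))"
  have F1a: "?n \<le> Lw E V g (x, True) + 2" using F1[where E=E, OF Esym Eirr gl aV(1)] .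
  have F1b: "?n \<le> Lw E V g (x, False) + 2" using F1[where E=E, OF Esym Eirr gl aV(2)] .
  have F3a: "?F \<noteq> Some (x, True) \<Longrightarrow> ?n \<le> Lw E V g (x, True)"
    using F3[where E=E, OF Esym Eirr gl aV(1)] by simp
  have F3b: "?F \<noteq> Some (x, False) \<Longrightarrow> ?n \<le> Lw E V g (x, False)"
    using F3[where E=E, OF Esym Eirr gl aV(2)] by simp
  have F4a: "?L \<noteq> Some (x, False) \<Longrightarrow> ?n \<le> Lw E V g (x, True)"
    using F4[where E=E, OF Esym Eirr gl aV(1)] by simp
  have F4b: "?L \<noteq> Some (x, True) \<Longrightarrow> ?n \<le> Lw E V g (x, False)"
    using F4[where E=E, OF Esym Eirr gl aV(2)] by simp
  have F5a: "?F \<noteq> Some (x, True) \<Longrightarrow> ?L \<noteq> Some (x, False) \<Longrightarrow> ?F \<noteq> None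
     \<Longrightarrow> Lw E V g (x, True) = ?n + 2"
    using F5[where E=E, OF Esym Eirr gl aV(1)] by simp
  have F5b: "?F \<noteq> Some (x, False) \<Longrightarrow> ?L \<noteq> Some (x, True) \<Longrightarrow> ?F \<noteq> None
     \<Longrightarrow> Lw E V g (x, False) = ?n + 2"
    using F5[where E=E, OF Esym Eirr gl aV(2)] by simp
  show ?thesis
  proof (cases "?F = Some (x, True)")
    case T: True
    show ?thesis
    proof (cases "?L = Some (x, False)")
      case True
      then have "Lw E V g (x, False) = ?n + 2" using T F5b by simp
      then show ?thesis using F1a by simp
    next
      case False
      then show ?thesis using T F4a F3b by simp
    qed
  next
    case nT: False
    show ?thesis
    proof (cases "?F = Some (x, False)")
      case T: True
      show ?thesis
      proof (cases "?L = Some (x, True)")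
        case True
        then have "Lw E V g (x, True) = ?n + 2" using T F5a by simp
        then show ?thesis using F1b by simp
      next
        case False
        then show ?thesis using T F4b F3a by simp
      qed
    next
      case False
      then show ?thesis using nT F3a F3b by simp
    qed
  qed
qed

lemma pair_gt: "x \<in> V \<Longrightarrow> fnc E x (nf E g) = Some e \<Longrightarrow> fst e \<noteq> x
   \<Longrightarrow> 2 * length (nf E g) < Lw E V g (x, True) + Lw E V g (x, False)"
proof -
  assume x: "x \<in> V" and e: "fnc E x (nf E g) = Some e" "fst e \<noteq> x"
  have aV: "(x, True) \<in> V \<times> UNIV" "(x, False) \<in> V \<times> UNIV" using x by auto
  let ?n = "length (nf E g)" and ?F = "fnc E x (nf E g)" and ?L = "fnc E x (rev (nf E g))"
  have F3a: "?F \<noteq> Some (x, True) \<Longrightarrow> ?n \<le> Lw E V g (x, True)"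
    using F3[where E=E, OF Esym Eirr gl aV(1)] by simp
  have F3b: "?F \<noteq> Some (x, False) \<Longrightarrow> ?n \<le> Lw E V g (x, False)"
    using F3[where E=E, OF Esym Eirr gl aV(2)] by simp
  have F5a: "?F \<noteq> Some (x, True) \<Longrightarrow> ?L \<noteq> Some (x, False) \<Longrightarrow> ?F \<noteq> None
     \<Longrightarrow> Lw E V g (x, True) = ?n + 2"
    using F5[where E=E, OF Esym Eirr gl aV(1)] by simp
  have F5b: "?F \<noteq> Some (x, False) \<Longrightarrow> ?L \<noteq> Some (x, True) \<Longrightarrow> ?F \<noteq> None
     \<Longrightarrow> Lw E V g (x, False) = ?n + 2"
    using F5[where E=E, OF Esym Eirr gl aV(2)] by simp
  have n1: "fnc E x (nf E g) \<noteq> Some (x, True)" "fnc E x (nf E g) \<noteq> Some (x, False)"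
    "fnc E x (nf E g) \<noteq> None" using e by auto
  show ?thesis
  proof (cases "fnc E x (rev (nf E g)) = Some (x, False)")
    case True
    then have "Lw E V g (x, False) = ?n + 2" using n1 F5b by simp
    then show ?thesis using n1 F3a by simp
  next
    case False
    then have "Lw E V g (x, True) = ?n + 2" using n1 F5a by simp
    then show ?thesis using n1 F3b by simp
  qed
qed

lemma pair_ge': "v \<in> V \<Longrightarrow> 2 * length (nf E g) \<le> Lw E V g (v, True) + Lw E V g (v, False)"
  by (rule pair_ge)

lemma pair_gt': "v \<in> V \<Longrightarrow> fnc E v (nf E g) = Some f \<Longrightarrow> fst f \<noteq> v
   \<Longrightarrow> 2 * length (nf E g) < Lw E V g (v, True) + Lw E V g (v, False)"
  by (rule pair_gt)

lemma central_Lw: "raag_central V E g \<Longrightarrow> a \<in> V \<times> UNIV \<Longrightarrow> Lw E V g a = length (nf E g)"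
proof -
  assume c: "raag_central V E g" and a: "a \<in> V \<times> UNIV"
  have "[a] \<in> lists (gens V)" using a by (simp add: gens_def)
  then have "raag_eq E (g @ [a]) ([a] @ g)" using c unfolding raag_central_def by blast
  then have "raag_eq E ([letter_inv a] @ g @ [a]) ([letter_inv a] @ [a] @ g)"
    using req_prefix by fastforce
  moreover have "raag_eq E ([letter_inv a] @ [a] @ g) g"
    using req_cancel_front[of E "letter_inv a" g] by simp
  ultimately have "raag_eq E ([letter_inv a] @ g @ [a]) g" using req_trans by blast
  then have "Lw E V g a = raag_len V E g"
    using len_eq[where E=E, OF Esym Eirr _ Wl[where E=E, OF Esym Eirr gl a] gl] by blast
  then show ?thesis using ng[where E=E, OF Esym Eirr gl] by simp
qed

lemma commute_gen_central: "(\<forall>a\<in>gens V. raag_eq E (g @ [a]) ([a] @ g)) \<Longrightarrow> raag_central V E g"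
  unfolding raag_central_def
proof
  fix u assume h: "\<forall>a\<in>gens V. raag_eq E (g @ [a]) ([a] @ g)" and u: "u \<in> lists (gens V)"
  from u show "raag_eq E (g @ u) (u @ g)"
  proof (induction u)
    case Nil
    then show ?case by simp
  next
    case (Cons a u)
    have "raag_eq E ((g @ [a]) @ u) (([a] @ g) @ u)"
      using h Cons.hyps req_suffix by blast
    moreover have "raag_eq E (a # g @ u) (a # u @ g)" using Cons.IH req_Cons by blast
    ultimately show ?case using req_trans by fastforce
  qed
qed

lemma good_vertex: "\<not> raag_central V E g \<Longrightarrow>
   \<exists>y\<in>V. \<exists>e. fnc E y (nf E g) = Some e \<and> fst e \<noteq> y"
proof -
  assume nc: "\<not> raag_central V E g"
  then obtain a where a: "a \<in> gens V" "\<not> raag_eq E (g @ [a]) ([a] @ g)"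
    using commute_gen_central by blast
  let ?x = "fst a"
  have xV: "?x \<in> V" using a(1) by (auto simp: gens_def)
  have "\<exists>e\<in>set (nf E g). fst e \<noteq> ?x \<and> \<not> E ?x (fst e)"
  proof (rule ccontr)
    assume "\<not> ?thesis"
    then have "raag_eq E (nf E g @ [a]) (a # nf E g)"
      using commute_all[where E=E, OF Esym Eirr] by blast
    moreover have "raag_eq E (g @ [a]) (nf E g @ [a])"
      using req_suffix req_nf req_sym by blast
    moreover have "raag_eq E (a # nf E g) (a # g)"
      using req_Cons req_nf by blast
    ultimately have "raag_eq E (g @ [a]) (a # g)" using req_trans by meson
    then show False using a(2) by simp
  qed
  then obtain e where e: "e \<in> set (nf E g)" "fst e \<noteq> ?x" "\<not> E ?x (fst e)" by blast
  have zV: "fst e \<in> V" using e(1) nf_lists[OF gl, of E] by auto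
  obtain f where f: "fnc E ?x (nf E g) = Some f" using fnc_Some[where E=E and x="fst a", OF e(1) e(3)] by blast
  obtain f' where f': "fnc E (fst e) (nf E g) = Some f'" using fnc_Some[where E=E and x="fst e", OF e(1)] Eirr by blast
  have "fst f \<noteq> ?x \<or> fst f' \<noteq> fst e"
    using two_first[where E=E, OF Esym Eirr f _ f' _ ] e(2,3) by metis
  then show ?thesis using f f' xV zV by blast
qed

end


theorem mainTheorem14:
  fixes V :: "'v set" and E :: "'v \<Rightarrow> 'v \<Rightarrow> bool" and g :: "'v letter list"
  assumes "finite V"
    and "\<And>x y. E x y \<Longrightarrow> x \<in> V \<and> y \<in> V"
    and "\<And>x y. E x y \<Longrightarrow> E y x"
    and "\<And>x. \<not> E x x"
    and "g \<in> lists (gens V)"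
    and "\<not> raag_eq E g []"
  shows "(raag_curv V E g = 0 \<longleftrightarrow> raag_central V E g)
       \<and> (\<not> raag_central V E g \<longrightarrow> raag_curv V E g < 0)"
proof -
  have gl: "g \<in> lists (V \<times> UNIV)" using assms(5) by (simp add: gens_def)
  have Esym: "\<And>x y. E x y \<Longrightarrow> E y x" and Eirr: "\<And>x. \<not> E x x" using assms(3,4) by auto
  define n where "n = length (nf E g)"
  have len: "raag_len V E g = n" using ng[where E=E, OF Esym Eirr gl] n_def by simp
  have npos: "n > 0"
  proof (rule ccontr)
    assume "\<not> n > 0"
    then have "nf E g = []" using n_def by simp
    then have "raag_eq E g []" using req_sym[OF req_nf[of E g]] by simp
    then show False using assms(6) by simp
  qed
  have "g \<noteq> []" using assms(6) by auto
  then obtain c where "c \<in> set g" by (cases g) auto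
  then have "fst c \<in> V" using gl by auto
  then have Vne: "card V > 0" using assms(1) card_gt_0_iff by blast
  have C: "card (gens V) = 2 * card V" using card_gens[OF assms(1)] .
  have PG: "2 * n \<le> Lw E V g (v, True) + Lw E V g (v, False)" if "v \<in> V" for v
    using pair_ge'[where E=E, OF Esym Eirr gl that] unfolding n_def .
  have PT: "2 * n < Lw E V g (v, True) + Lw E V g (v, False)"
    if "v \<in> V" "fnc E v (nf E g) = Some f" "fst f \<noteq> v" for v f
    using pair_gt'[where E=E, OF Esym Eirr gl that] unfolding n_def .
  let ?S = "\<Sum>a\<in>gens V. real (Lw E V g a)"
  have Av: "raag_Av V E g = ?S / real (card (gens V))" by (simp add: raag_Av_def)
  have S: "?S = (\<Sum>x\<in>V. real (Lw E V g (x, True)) + real (Lw E V g (x, False)))"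
    using sum_gens[OF assms(1)] .
  have curv: "raag_curv V E g = (real n - raag_Av V E g) / real n"
    by (simp add: raag_curv_def len)
  have cent: "raag_curv V E g = 0" if c: "raag_central V E g"
  proof -
    have "\<And>a. a \<in> gens V \<Longrightarrow> Lw E V g a = n"
      using central_Lw[where E=E, OF Esym Eirr gl c] n_def by (simp add: gens_def)
    then have "?S = (\<Sum>a\<in>gens V. real n)" by (intro sum.cong) auto
    also have "\<dots> = real (card (gens V)) * real n" by simp
    finally have "?S = real (card (gens V)) * real n" .
    moreover have cpos: "real (card (gens V)) > 0" using C Vne by simp
    ultimately have "raag_Av V E g = real n" using Av by simp
    then show ?thesis using curv by simp
  qed
  have noncent: "raag_curv V E g < 0" if c: "\<not> raag_central V E g"
  proof -
    obtain y e where y: "y \<in> V" "fnc E y (nf E g) = Some e" "fst e \<noteq> y"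
      using good_vertex[where E=E, OF Esym Eirr gl c] by blast
    have "(\<Sum>x\<in>V. 2 * real n) < (\<Sum>x\<in>V. real (Lw E V g (x, True)) + real (Lw E V g (x, False)))"
    proof (rule sum_strict_mono_ex1[OF assms(1)])
      show "\<forall>x\<in>V. 2 * real n \<le> real (Lw E V g (x, True)) + real (Lw E V g (x, False))"
      proof
        fix x assume "x \<in> V"
        then have "2 * n \<le> Lw E V g (x, True) + Lw E V g (x, False)"
          using PG by blast
        then show "2 * real n \<le> real (Lw E V g (x, True)) + real (Lw E V g (x, False))"
          by linarith
      qed
      have "2 * n < Lw E V g (y, True) + Lw E V g (y, False)"
        using PT y by blast
      then have "2 * real n < real (Lw E V g (y, True)) + real (Lw E V g (y, False))"
        by linarith
      then show "\<exists>x\<in>V. 2 * real n < real (Lw E V g (x, True)) + real (Lw E V g (x, False))"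
        using y(1) by blast
    qed
    moreover have "(\<Sum>x\<in>V. 2 * real n) = real (card V) * (2 * real n)"
      by (rule sum_constant)
    moreover have "real (card (gens V)) = 2 * real (card V)" using C by simp
    ultimately have "real (card (gens V)) * real n < ?S" using S by (simp only:)
    moreover have cpos: "real (card (gens V)) > 0" using C Vne by simp
    ultimately have "real n * real (card (gens V)) < ?S" by (simp only: mult.commute)
    then have "real n < ?S / real (card (gens V))"
      using pos_less_divide_eq[OF cpos] by blast
    then have "real n - raag_Av V E g < 0" unfolding Av by linarith
    then have "(real n - raag_Av V E g) / real n < 0"
      using npos by (intro divide_neg_pos) auto
    then show ?thesis using curv by simp
  qed
  show ?thesis
  proof (cases "raag_central V E g")
    case True
    then show ?thesis using cent by simp
  next
    case False
    then show ?thesis using noncent by fastforce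
  qed
qed

end
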